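(* For fixed $\vec a\in\mathcal M$, the multiplication $\circ$ on $\mathcal H\times\mathcal H$ descends to a well-defined commutative associative multiplication on the cotangent space $T^*_{\vec a}\mathcal M=(\mathcal H\times\mathcal H)/\ker\eta$; equivalently, if $\eta(\vec\omega_2)=0$ then $\eta(\vec\omega_1\circ\vec\omega_2)=0$ for every $\vec\omega_1\in\mathcal H\times\mathcal H$.
   Context: Fix $m\ge1$, positive integers $n_0,\dots,n_m$, nonzero integers $d_1,\dots,d_m$; $D_1,\dots,D_m\subset\mathbb C$ pairwise disjoint closed disks, $\gamma_i=\partial D_i$ positively oriented, $\mathbf D^{int}=\bigcup(D_i\setminus\gamma_i)$, $\mathbf D^{ext}=\mathbb P^1\setminus\bigcup D_i$; $\mathcal H$ = germs of functions holomorphic near $\bigcup\gamma_i$; $f=f_++f_-$, $f_+(z)=\frac1{2\pi\mathrm i}\sum_s\oint_{\gamma_s}\frac{f(p)}{p-z}dp$ ($z$ inside), $f_-=-(\text{same})$ ($z$ outside), $f_-(\infty)=0$. $\mathcal M$: pairs $\vec a=(a,\hat a)\in\mathcal H\times\mathcal H$, $a$ meromorphic on $\mathbf D^{ext}$, only pole $\infty$, $a=z^{n_0}+a_{n_0-2}z^{n_0-2}+\cdots$; $\hat a$ meromorphic on $\mathbf D^{int}$, only poles $\varphi_j\in D_j\setminus\gamma_j$, $\hat a=\hat a_{j,-n_j}(z-\varphi_j)^{-n_j}+\cdots$, $\hat a_{j,-n_j}\ne0$; $a-\hat a=w_j^{d_j}$ on $\gamma_j$, $w_j$ holomorphic near $\gamma_j$,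 $w_j'\ne0$, $w_j(\gamma_j)$ winding once about $0$. Tangent vectors $X\leftrightarrow(\partial_Xa,\partial_X\hat a)$; $'=\partial_z$. $\eta:\mathcal H\times\mathcal H\to T_{\vec a}\mathcal M$, $\eta(\omega,\hat\omega)=(a'(\omega+\hat\omega)_--(\omega a'+\hat\omega\hat a')_-,-\hat a'(\omega+\hat\omega)_++(\omega a'+\hat\omega\hat a')_+)$. Multiplication: $(\omega_1,\hat\omega_1)\circ(\omega_2,\hat\omega_2)=(\omega_2(\omega_1a')_+-\omega_1(\omega_2a')_--\omega_2(\hat\omega_1\hat a')_--\omega_1(\hat\omega_2\hat a')_-,\ \hat\omega_2(\hat\omega_1\hat a')_+-\hat\omega_1(\hat\omega_2\hat a')_-+\hat\omega_1(\omega_2a')_++\hat\omega_2(\omega_1a')_+)$. *)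

theory Defs
  imports "HOL-Complex_Analysis.Complex_Analysis"
begin

definition circles :: "(nat \<Rightarrow> complex) \<Rightarrow> (nat \<Rightarrow> real) \<Rightarrow> nat \<Rightarrow> complex set" where
  "circles c r m = (\<Union>i\<in>{1..m}. sphere (c i) (r i))"

definition disks_int :: "(nat \<Rightarrow> complex) \<Rightarrow> (nat \<Rightarrow> real) \<Rightarrow> nat \<Rightarrow> complex set" where
  "disks_int c r m = (\<Union>i\<in>{1..m}. ball (c i) (r i))"

definition disks :: "(nat \<Rightarrow> complex) \<Rightarrow> (nat \<Rightarrow> real) \<Rightarrow> nat \<Rightarrow> complex set" where
  "disks c r m = (\<Union>i\<in>{1..m}. cball (c i) (r i))"

text \<open>Germs of holomorphic functions near the union of the circles (the space H).\<close>
definition holo_near :: "(nat \<Rightarrow> complex) \<Rightarrow> (nat \<Rightarrow> real) \<Rightarrow> nat \<Rightarrow> (complex \<Rightarrow> complex) \<Rightarrow> bool" where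
  "holo_near c r m f \<longleftrightarrow> (\<exists>U. open U \<and> circles c r m \<subseteq> U \<and> f holomorphic_on U)"

definition cauchy_int :: "(nat \<Rightarrow> complex) \<Rightarrow> (nat \<Rightarrow> real) \<Rightarrow> nat \<Rightarrow> (complex \<Rightarrow> complex) \<Rightarrow> complex \<Rightarrow> complex" where
  "cauchy_int c r m f z = (1 / (2 * of_real pi * \<i>)) *
     (\<Sum>s\<in>{1..m}. contour_integral (circlepath (c s) (r s)) (\<lambda>p. f p / (p - z)))"

text \<open>g is (a representative of the germ of) f_+ : the holomorphic continuation, to a
  neighbourhood of the circles, of the Cauchy integral defined for z inside the disks.\<close>
definition is_plus_part :: "(nat \<Rightarrow> complex) \<Rightarrow> (nat \<Rightarrow> real) \<Rightarrow> nat \<Rightarrow> (complex \<Rightarrow> complex) \<Rightarrow> (complex \<Rightarrow> complex) \<Rightarrow> bool" where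
  "is_plus_part c r m f g \<longleftrightarrow> (\<exists>V. open V \<and> circles c r m \<subseteq> V \<and>
      g holomorphic_on (V \<union> disks_int c r m) \<and>
      (\<forall>z\<in>disks_int c r m. g z = cauchy_int c r m f z))"

text \<open>g is f_- : continuation of minus the Cauchy integral defined for z outside the disks.\<close>
definition is_minus_part :: "(nat \<Rightarrow> complex) \<Rightarrow> (nat \<Rightarrow> real) \<Rightarrow> nat \<Rightarrow> (complex \<Rightarrow> complex) \<Rightarrow> (complex \<Rightarrow> complex) \<Rightarrow> bool" where
  "is_minus_part c r m f g \<longleftrightarrow> (\<exists>V. open V \<and> circles c r m \<subseteq> V \<and>
      g holomorphic_on (V \<union> (- disks c r m)) \<and>
      (\<forall>z\<in>- disks c r m. g z = - cauchy_int c r m f z))"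

definition pplus :: "(nat \<Rightarrow> complex) \<Rightarrow> (nat \<Rightarrow> real) \<Rightarrow> nat \<Rightarrow> (complex \<Rightarrow> complex) \<Rightarrow> complex \<Rightarrow> complex" where
  "pplus c r m f = (SOME g. is_plus_part c r m f g)"

definition pminus :: "(nat \<Rightarrow> complex) \<Rightarrow> (nat \<Rightarrow> real) \<Rightarrow> nat \<Rightarrow> (complex \<Rightarrow> complex) \<Rightarrow> complex \<Rightarrow> complex" where
  "pminus c r m f = (SOME g. is_minus_part c r m f g)"

type_synonym cpair = "(complex \<Rightarrow> complex) \<times> (complex \<Rightarrow> complex)"

definition eta :: "(nat \<Rightarrow> complex) \<Rightarrow> (nat \<Rightarrow> real) \<Rightarrow> nat \<Rightarrow> (complex \<Rightarrow> complex) \<Rightarrow> (complex \<Rightarrow> complex) \<Rightarrow> cpair \<Rightarrow> cpair" where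
  "eta c r m a ah w =
     (let om = fst w; omh = snd w;
          s = (\<lambda>z. om z + omh z);
          t = (\<lambda>z. om z * deriv a z + omh z * deriv ah z)
      in (\<lambda>z. deriv a z * pminus c r m s z - pminus c r m t z,
          \<lambda>z. - deriv ah z * pplus c r m s z + pplus c r m t z))"

definition mult :: "(nat \<Rightarrow> complex) \<Rightarrow> (nat \<Rightarrow> real) \<Rightarrow> nat \<Rightarrow> (complex \<Rightarrow> complex) \<Rightarrow> (complex \<Rightarrow> complex) \<Rightarrow> cpair \<Rightarrow> cpair \<Rightarrow> cpair" where
  "mult c r m a ah w1 w2 =
     (let o1 = fst w1; oh1 = snd w1; o2 = fst w2; oh2 = snd w2;
          P = pplus c r m; N = pminus c r m;
          A1 = (\<lambda>z. o1 z * deriv a z); A2 = (\<lambda>z. o2 z * deriv a z);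
          B1 = (\<lambda>z. oh1 z * deriv ah z); B2 = (\<lambda>z. oh2 z * deriv ah z)
      in (\<lambda>z. o2 z * P A1 z - o1 z * N A2 z - o2 z * N B1 z - o1 z * N B2 z,
          \<lambda>z. oh2 z * P B1 z - oh1 z * N B2 z + oh1 z * P A2 z + oh2 z * P A1 z))"

definition germ_eq :: "(nat \<Rightarrow> complex) \<Rightarrow> (nat \<Rightarrow> real) \<Rightarrow> nat \<Rightarrow> cpair \<Rightarrow> cpair \<Rightarrow> bool" where
  "germ_eq c r m p q \<longleftrightarrow> (\<exists>U. open U \<and> circles c r m \<subseteq> U \<and>
      (\<forall>z\<in>U. fst p z = fst q z \<and> snd p z = snd q z))"

definition in_M :: "(nat \<Rightarrow> complex) \<Rightarrow> (nat \<Rightarrow> real) \<Rightarrow> nat \<Rightarrow> (nat \<Rightarrow> nat) \<Rightarrow> (nat \<Rightarrow> int) \<Rightarrow>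
    (nat \<Rightarrow> complex) \<Rightarrow> (complex \<Rightarrow> complex) \<Rightarrow> (complex \<Rightarrow> complex) \<Rightarrow> bool" where
  "in_M c r m n d \<phi> a ah \<longleftrightarrow>
     \<comment> \<open>a holomorphic near the circles and on the exterior (only pole at infinity)\<close>
     (\<exists>U. open U \<and> - disks_int c r m \<subseteq> U \<and> a holomorphic_on U) \<and>
     \<comment> \<open>a = z^n0 + a_{n0-2} z^{n0-2} + ... at infinity, i.e. (a - z^n0) = O(z^(n0-2))\<close>
     (\<exists>C R. \<forall>z. R \<le> norm z \<longrightarrow> norm ((a z - z ^ n 0) * z ^ 2) \<le> C * norm z ^ n 0) \<and>
     \<comment> \<open>ah holomorphic near the circles and on the disk interiors except the poles phi_j\<close>
     (\<exists>U. open U \<and> disks c r m \<subseteq> U \<and> ah holomorphic_on (U - \<phi> ` {1..m})) \<and>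
     (\<forall>j\<in>{1..m}. \<phi> j \<in> ball (c j) (r j) \<and>
        (\<exists>coef. coef \<noteq> 0 \<and> ((\<lambda>z. (z - \<phi> j) ^ n j * ah z) \<longlongrightarrow> coef) (at (\<phi> j)))) \<and>
     \<comment> \<open>a - ah = w_j^{d_j} near gamma_j\<close>
     (\<forall>j\<in>{1..m}. \<exists>U w. open U \<and> sphere (c j) (r j) \<subseteq> U \<and> w holomorphic_on U \<and>
        (\<forall>z\<in>U. w z \<noteq> 0 \<and> deriv w z \<noteq> 0 \<and> a z - ah z = w z powi d j) \<and>
        winding_number (w \<circ> circlepath (c j) (r j)) 0 = 1)"

end

theory Submission
  imports Defs
begin


lemma cauchy_holo:
  assumes "continuous_on (sphere c \<rho>) f" "0 < \<rho>"
  shows "(\<lambda>z. contour_integral (circlepath c \<rho>) (\<lambda>p. f p / (p - z))) holomorphic_on (- sphere c \<rho>)"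
proof -
  have op: "open (- sphere c \<rho>)" by auto
  show ?thesis unfolding holomorphic_on_open[OF op]
  proof
    fix w assume w: "w \<in> - sphere c \<rho>"
    have "((\<lambda>z. contour_integral (circlepath c \<rho>) (\<lambda>p. f p / (p - z))) has_field_derivative
       (of_nat 1 * contour_integral (circlepath c \<rho>) ((\<lambda>k w u. f u / (u-w)^k) (Suc 1) w))) (at w)"
    proof (rule Cauchy_next_derivative(2)[where S = UNIV and B = "2*pi*\<rho>"])
      show "continuous_on (path_image (circlepath c \<rho>)) f" using assms by simp
      show "norm (vector_derivative (circlepath c \<rho>) (at t)) \<le> 2*pi*\<rho>" for t
        using assms by (simp add: vector_derivative_circlepath norm_mult)
      show "((\<lambda>k w u. f u / (u-w)^k) 1 z has_contour_integral contour_integral (circlepath c \<rho>) (\<lambda>p. f p / (p - z))) (circlepath c \<rho>)"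
        if "z \<in> UNIV - path_image (circlepath c \<rho>)" for z
      proof -
        have "continuous_on (path_image (circlepath c \<rho>)) (\<lambda>p. f p / (p - z))"
          using that assms by (auto intro!: continuous_intros)
        then show ?thesis
          by (auto intro!: has_contour_integral_integral contour_integrable_continuous_circlepath)
      qed
    qed (use w assms in auto)
    then show "\<exists>f'. ((\<lambda>z. contour_integral (circlepath c \<rho>) (\<lambda>p. f p / (p - z))) has_field_derivative f') (at w)" by blast
  qed
qed

lemma circle_deform:
  assumes "open S" "f holomorphic_on S" "0 < \<rho>" "\<rho> \<le> R"
    and ann: "\<And>w. \<rho> \<le> norm(w - c) \<Longrightarrow> norm(w-c) \<le> R \<Longrightarrow> w \<in> S"
  shows "contour_integral (circlepath c \<rho>) f = contour_integral (circlepath c R) f"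
proof (rule Cauchy_theorem_homotopic_loops[OF _ assms(1,2)])
  show "homotopic_loops S (circlepath c \<rho>) (circlepath c R)"
  proof (rule homotopic_loops_linear)
    fix t :: real assume t: "t \<in> {0..1}"
    show "closed_segment (circlepath c \<rho> t) (circlepath c R t) \<subseteq> S"
    proof
      fix x assume "x \<in> closed_segment (circlepath c \<rho> t) (circlepath c R t)"
      then obtain u where u: "0 \<le> u" "u \<le> 1" and x: "x = (1 - u) *\<^sub>R circlepath c \<rho> t + u *\<^sub>R circlepath c R t"
        unfolding closed_segment_def by auto
      define k where "k = (1-u)*\<rho> + u*R"
      have k0: "0 \<le> k" unfolding k_def using u assms(3,4) by (smt (verit) mult_nonneg_nonneg)
      have "x - c = complex_of_real k * exp (2 * of_real pi * \<i> * t)"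
        unfolding x circlepath_def part_circlepath_def linepath_def scaleR_conv_of_real k_def
        by (simp add: algebra_simps)
      then have nx: "norm (x - c) = (1-u)*\<rho> + u*R"
        using k0 unfolding k_def[symmetric] by (simp add: norm_mult)
      have p1: "0 \<le> (R-\<rho>)*u" "0 \<le> (R-\<rho>)*(1-u)" using u assms(4) by simp_all
      have "\<rho> \<le> (1-u)*\<rho> + u*R" using p1 by (simp add: algebra_simps)
      moreover have "(1-u)*\<rho> + u*R \<le> R" using p1 by (simp add: algebra_simps)
      ultimately show "x \<in> S" using ann nx by auto
    qed
  qed auto
qed auto


lemma cint_integrable:
  assumes "continuous_on S f" "sphere c \<rho> \<subseteq> S" "z \<notin> sphere c \<rho>" "0 \<le> \<rho>"
  shows "((\<lambda>p. f p / (p - z)) has_contour_integral contour_integral (circlepath c \<rho>) (\<lambda>p. f p / (p - z))) (circlepath c \<rho>)"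
proof -
  have pi: "path_image (circlepath c \<rho>) \<subseteq> sphere c \<rho>"
    using assms(4) by auto
  have "continuous_on (path_image (circlepath c \<rho>)) f"
    using assms(1,2) pi continuous_on_subset by blast
  then have "continuous_on (path_image (circlepath c \<rho>)) (\<lambda>p. f p / (p - z))"
    using assms(3) pi by (auto intro!: continuous_intros)
  then show ?thesis
    by (auto intro!: has_contour_integral_integral contour_integrable_continuous_circlepath)
qed

lemma circ_in:
  assumes "open U" "f holomorphic_on U" "0 < r" "r \<le> R"
    and ann: "\<And>w. r \<le> norm(w - c) \<Longrightarrow> norm(w-c) \<le> R \<Longrightarrow> w \<in> U"
    and z: "norm (z - c) < r"
  shows "contour_integral (circlepath c r) (\<lambda>p. f p / (p - z)) = contour_integral (circlepath c R) (\<lambda>p. f p / (p - z))"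
proof (rule circle_deform[where S = "U - {z}"])
  show "open (U - {z})" using assms by auto
  show "(\<lambda>p. f p / (p - z)) holomorphic_on U - {z}"
    using assms(2) by (auto intro!: holomorphic_intros elim: holomorphic_on_subset)
  show "w \<in> U - {z}" if "r \<le> cmod (w - c)" "cmod (w - c) \<le> R" for w
    using that ann z by auto
qed (use assms in auto)

lemma circ_out:
  assumes "open U" "f holomorphic_on U" "0 < \<rho>" "\<rho> \<le> r"
    and ann: "\<And>w. \<rho> \<le> norm(w - c) \<Longrightarrow> norm(w-c) \<le> r \<Longrightarrow> w \<in> U"
    and z: "norm (z - c) > r"
  shows "contour_integral (circlepath c r) (\<lambda>p. f p / (p - z)) = contour_integral (circlepath c \<rho>) (\<lambda>p. f p / (p - z))"
proof (rule sym, rule circle_deform[where S = "U - {z}"])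
  show "open (U - {z})" using assms by auto
  show "(\<lambda>p. f p / (p - z)) holomorphic_on U - {z}"
    using assms(2) by (auto intro!: holomorphic_intros elim: holomorphic_on_subset)
  show "w \<in> U - {z}" if "\<rho> \<le> cmod (w - c)" "cmod (w - c) \<le> r" for w
    using that ann z by auto
qed (use assms in auto)

lemma circ_jump:
  assumes "open U" "f holomorphic_on U" "0 < \<rho>" "\<rho> \<le> R"
    and ann: "\<And>w. \<rho> \<le> norm(w - c) \<Longrightarrow> norm(w-c) \<le> R \<Longrightarrow> w \<in> U"
    and z1: "\<rho> < norm (z - c)" and z2: "norm (z - c) < R"
  shows "contour_integral (circlepath c R) (\<lambda>p. f p / (p - z)) - contour_integral (circlepath c \<rho>) (\<lambda>p. f p / (p - z))
      = 2 * of_real pi * \<i> * f z"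
proof -
  define g where "g = (\<lambda>p. if p = z then deriv f z else (f p - f z) / (p - z))"
  have gh: "g holomorphic_on U" unfolding g_def using pole_lemma_open assms(1,2) by blast
  have eq: "contour_integral (circlepath c \<rho>) g = contour_integral (circlepath c R) g"
    by (rule circle_deform[OF assms(1) gh assms(3,4) ann])
  have fc: "continuous_on U f" using assms(2) holomorphic_on_imp_continuous_on by blast
  have sR: "sphere c R \<subseteq> U" "sphere c \<rho> \<subseteq> U" using ann assms(3,4) by (auto simp: dist_norm norm_minus_commute)
  have zR: "z \<notin> sphere c R" "z \<notin> sphere c \<rho>" using z1 z2 by (auto simp: dist_norm norm_minus_commute)
  have iR: "((\<lambda>p. f p / (p - z)) has_contour_integral contour_integral (circlepath c R) (\<lambda>p. f p / (p - z))) (circlepath c R)"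
    by (rule cint_integrable[OF fc sR(1) zR(1)]) (use assms in auto)
  have ir: "((\<lambda>p. f p / (p - z)) has_contour_integral contour_integral (circlepath c \<rho>) (\<lambda>p. f p / (p - z))) (circlepath c \<rho>)"
    by (rule cint_integrable[OF fc sR(2) zR(2)]) (use assms in auto)
  have jR: "((\<lambda>p. 1 / (p - z)) has_contour_integral (2 * of_real pi * \<i> * 1)) (circlepath c R)"
    using Cauchy_integral_circlepath[of c R "\<lambda>_. 1" z] z2 by (simp add: norm_minus_commute)
  have jr: "((\<lambda>p. 1 / (p - z)) has_contour_integral 0) (circlepath c \<rho>)"
  proof (rule Cauchy_theorem_convex_simple[where S = "cball c \<rho>"])
    show "(\<lambda>p. 1 / (p - z)) holomorphic_on cball c \<rho>"
      using z1 by (auto intro!: holomorphic_intros simp: dist_norm norm_minus_commute)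
    show "path_image (circlepath c \<rho>) \<subseteq> cball c \<rho>" using assms(3) by auto
  qed auto
  have gR: "(g has_contour_integral (contour_integral (circlepath c R) (\<lambda>p. f p / (p - z)) - f z * (2 * of_real pi * \<i> * 1))) (circlepath c R)"
    apply (rule has_contour_integral_eq[OF has_contour_integral_diff[OF iR has_contour_integral_lmul[OF jR, of "f z"]]])
    using zR assms(3,4) by (auto simp: g_def diff_divide_distrib)
  have gr: "(g has_contour_integral (contour_integral (circlepath c \<rho>) (\<lambda>p. f p / (p - z)) - f z * 0)) (circlepath c \<rho>)"
    apply (rule has_contour_integral_eq[OF has_contour_integral_diff[OF ir has_contour_integral_lmul[OF jr, of "f z"]]])
    using zR assms(3,4) by (auto simp: g_def diff_divide_distrib)
  show ?thesis using eq contour_integral_unique[OF gR] contour_integral_unique[OF gr]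
    by (simp add: algebra_simps)
qed

lemma circ_tendsto:
  assumes "continuous_on (sphere c \<rho>) f" "0 < \<rho>"
  shows "((\<lambda>z. contour_integral (circlepath c \<rho>) (\<lambda>p. f p / (p - z))) \<longlongrightarrow> 0) at_infinity"
proof -
  have "compact (f ` sphere c \<rho>)" by (rule compact_continuous_image[OF assms(1)]) simp
  then obtain B where B: "B > 0" "\<And>x. x \<in> sphere c \<rho> \<Longrightarrow> norm (f x) \<le> B"
    using compact_imp_bounded bounded_pos by (metis image_eqI)
  define K where "K = 2 * B * (2 * pi * \<rho>)"
  have ev: "eventually (\<lambda>z. norm (contour_integral (circlepath c \<rho>) (\<lambda>p. f p / (p - z))) \<le> K * norm (inverse z)) at_infinity"
    unfolding eventually_at_infinity
  proof (intro exI[of _ "2 * (norm c + \<rho>) + 1"] allI impI)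
    fix z :: complex assume zb: "2 * (norm c + \<rho>) + 1 \<le> norm z"
    have z0: "z \<noteq> 0"
    proof
      assume "z = 0"
      with zb have "2*norm c + 2*\<rho> + 1 \<le> 0" by simp
      with assms(2) show False using norm_ge_zero[of c] by linarith
    qed
    have nz: "norm z > 0" using z0 by simp
    have zs: "z \<notin> sphere c \<rho>"
    proof
      assume "z \<in> sphere c \<rho>"
      then have "norm (z - c) = \<rho>" by (simp add: dist_norm norm_minus_commute)
      then have "norm z \<le> norm c + \<rho>" using norm_triangle_ineq[of "z - c" c] by simp
      then show False using zb assms(2) by (smt (verit) norm_ge_zero)
    qed
    have bnd: "norm (f p / (p - z)) \<le> 2 * B * norm (inverse z)" if "norm (p - c) = \<rho>" for p
    proof -
      have "norm p \<le> norm c + \<rho>" using that norm_triangle_ineq[of "p - c" c] by simp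
      then have d: "norm z / 2 \<le> norm (p - z)"
        using norm_triangle_ineq2[of z p] zb by (simp add: norm_minus_commute)
      have fp: "norm (f p) \<le> B" using B(2)[of p] that by (simp add: dist_norm norm_minus_commute)
      have "norm (f p / (p - z)) = norm (f p) / norm (p - z)" by (simp add: norm_divide)
      also have "\<dots> \<le> B / (norm z / 2)"
        using fp d nz B(1) by (intro frac_le) auto
      also have "\<dots> = 2 * B * norm (inverse z)" using nz by (simp add: norm_inverse norm_divide field_simps)
      finally show ?thesis .
    qed
    have "norm (contour_integral (circlepath c \<rho>) (\<lambda>p. f p / (p - z))) \<le> (2 * B * norm (inverse z)) * (2 * pi * \<rho>)"
      by (rule has_contour_integral_bound_circlepath[OF cint_integrable[OF assms(1) subset_refl zs less_imp_le[OF assms(2)]]])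
         (use bnd B assms(2) in auto)
    

    then show "norm (contour_integral (circlepath c \<rho>) (\<lambda>p. f p / (p - z))) \<le> K * norm (inverse z)"
      by (simp add: K_def algebra_simps)
  qed
  have "((\<lambda>z::complex. K * norm (inverse z)) \<longlongrightarrow> 0) at_infinity"
    by (intro tendsto_mult_right_zero tendsto_norm_zero) (use tendsto_inverse_0[where 'a=complex] in simp)
  then show ?thesis using Lim_null_comparison[OF ev] by blast
qed



locale circs =
  fixes c :: "nat \<Rightarrow> complex" and r :: "nat \<Rightarrow> real" and m :: nat
  assumes rpos: "\<And>i. i \<in> {1..m} \<Longrightarrow> r i > 0"
    and disj: "\<And>i j. i \<in> {1..m} \<Longrightarrow> j \<in> {1..m} \<Longrightarrow> i \<noteq> j \<Longrightarrow> cball (c i) (r i) \<inter> cball (c j) (r j) = {}"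
begin

abbreviation "C \<equiv> circles c r m"
abbreviation "Di \<equiv> disks_int c r m"
abbreviation "Dk \<equiv> disks c r m"

definition near :: "complex filter" where "near = (INF U\<in>{U. open U \<and> C \<subseteq> U}. principal U)"

lemma eventually_near: "eventually P near \<longleftrightarrow> (\<exists>U. open U \<and> C \<subseteq> U \<and> (\<forall>z\<in>U. P z))"
proof -
  have "eventually P near \<longleftrightarrow> (\<exists>b\<in>{U. open U \<and> C \<subseteq> U}. eventually P (principal b))"
    unfolding near_def
  proof (rule eventually_INF_base)
    show "{U. open U \<and> C \<subseteq> U} \<noteq> {}" by auto
    fix a b assume "a \<in> {U. open U \<and> C \<subseteq> U}" "b \<in> {U. open U \<and> C \<subseteq> U}"
    then show "\<exists>x\<in>{U. open U \<and> C \<subseteq> U}. principal x \<le> inf (principal a) (principal b)"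
      by (intro bexI[of _ "a \<inter> b"]) auto
  qed
  then show ?thesis by (auto simp: eventually_principal)
qed

lemma cball_split: "cball a e = ball a e \<union> sphere a e" by (auto simp: less_le)

lemma dist_centres:
  assumes "i \<in> {1..m}" "j \<in> {1..m}" "i \<noteq> j"
  shows "r i + r j < dist (c i) (c j)"
proof (rule ccontr)
  assume "\<not> r i + r j < dist (c i) (c j)"
  then have d: "dist (c i) (c j) \<le> r i + r j" by simp
  have ri: "r i > 0" and rj: "r j > 0" using rpos assms by auto
  define t where "t = r i / (r i + r j)"
  have t0: "0 \<le> t" "t \<le> 1" using ri rj by (auto simp: t_def)
  define p where "p = c i + of_real t * (c j - c i)"
  have "dist (c i) p = t * dist (c i) (c j)"
    using t0 by (simp add: p_def dist_norm norm_mult norm_minus_commute)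
  also have "\<dots> \<le> t * (r i + r j)" using d t0 by (simp add: mult_left_mono)
  also have "\<dots> = r i" using ri rj by (simp add: t_def)
  finally have p1: "p \<in> cball (c i) (r i)" by simp
  have "c j - p = of_real (1 - t) * (c j - c i)" by (simp add: p_def algebra_simps)
  then have "norm (c j - p) = norm (of_real (1 - t) :: complex) * norm (c j - c i)"
    by (simp only: norm_mult)
  then have "dist (c j) p = (1 - t) * dist (c i) (c j)"
    using t0 by (simp only: norm_of_real dist_norm norm_minus_commute abs_of_nonneg diff_ge_0_iff_ge)
  also have "\<dots> \<le> (1 - t) * (r i + r j)" using d t0 by (simp add: mult_left_mono)
  also have "\<dots> = r j" using ri rj by (simp add: t_def field_simps)
  finally have p2: "p \<in> cball (c j) (r j)" by simp
  show False using disj[OF assms] p1 p2 by auto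
qed

lemma C_def': "C = (\<Union>i\<in>{1..m}. sphere (c i) (r i))" by (simp add: circles_def)
lemma Di_def': "Di = (\<Union>i\<in>{1..m}. ball (c i) (r i))" by (simp add: disks_int_def)
lemma Dk_def': "Dk = (\<Union>i\<in>{1..m}. cball (c i) (r i))" by (simp add: disks_def)

lemma open_Di: "open Di" by (auto simp: Di_def')
lemma closed_Dk: "closed Dk" by (auto simp: Dk_def' intro!: closed_UN)
lemma compact_C: "compact C" by (auto simp: C_def' intro!: compact_UN)
lemma bounded_Dk: "bounded Dk" by (auto simp: Dk_def')
lemma Dk_eq: "Dk = Di \<union> C" unfolding Dk_def' Di_def' C_def' cball_split by auto
lemma C_sub_Dk: "C \<subseteq> Dk" by (auto simp: Dk_eq)
lemma Di_sub_Dk: "Di \<subseteq> Dk" by (auto simp: Dk_eq)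
lemma C_not_Di: "C \<inter> Di = {}"
proof -
  have *: "z \<notin> ball (c s) (r s)" if "z \<in> sphere (c j) (r j)" "j \<in> {1..m}" "s \<in> {1..m}" for z j s
  proof (cases "s = j")
    case True then show ?thesis using that by auto
  next
    case False
    show ?thesis
    proof
      assume "z \<in> ball (c s) (r s)"
      then have zz: "z \<in> cball (c j) (r j) \<inter> cball (c s) (r s)" using that by auto
      have "cball (c j) (r j) \<inter> cball (c s) (r s) = {}" using disj[of j s] False that by auto
      then show False using zz by blast
    qed
  qed
  have False if zC: "z \<in> C" and zD: "z \<in> Di" for z
  proof -
    obtain j where j: "j \<in> {1..m}" "z \<in> sphere (c j) (r j)" using zC unfolding C_def' by blast
    obtain s where s: "s \<in> {1..m}" "z \<in> ball (c s) (r s)" using zD unfolding Di_def' by blast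
    show False using *[OF j(2) j(1) s(1)] s(2) by blast
  qed
  then show ?thesis by blast
qed
lemma C_sub_nDi: "C \<subseteq> - Di" using C_not_Di by auto

lemma geo:
  assumes "open U" "C \<subseteq> U"
  obtains \<delta> where "\<delta> > 0" "\<And>s. s \<in> {1..m} \<Longrightarrow> \<delta> < r s"
    "\<And>s w. s \<in> {1..m} \<Longrightarrow> r s - \<delta> \<le> norm (w - c s) \<Longrightarrow> norm (w - c s) \<le> r s + \<delta> \<Longrightarrow> w \<in> U"
    "\<And>i j. i \<in> {1..m} \<Longrightarrow> j \<in> {1..m} \<Longrightarrow> i \<noteq> j \<Longrightarrow> r i + r j + 2 * \<delta> < dist (c i) (c j)"
proof -
  obtain \<epsilon> where e: "\<epsilon> > 0" "(\<Union>x\<in>C. ball x \<epsilon>) \<subseteq> U"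
    using compact_subset_open_imp_ball_epsilon_subset[OF compact_C assms] by blast
  define E where "E = {\<epsilon>/2} \<union> (\<lambda>s. r s / 2) ` {1..m} \<union>
     (\<lambda>(i,j). (dist (c i) (c j) - r i - r j) / 4) ` {(i,j). i \<in> {1..m} \<and> j \<in> {1..m} \<and> i \<noteq> j}"
  have fP: "finite {(i,j). i \<in> {1..m} \<and> j \<in> {1..m} \<and> i \<noteq> j}"
    by (rule finite_subset[of _ "{1..m} \<times> {1..m}"]) auto
  have fE: "finite E" unfolding E_def using fP by simp
  have nE: "E \<noteq> {}" unfolding E_def by simp
  have pE: "\<forall>x\<in>E. x > 0"
  proof
    fix x assume xE: "x \<in> E"
    consider "x = \<epsilon>/2" | s where "s\<in>{1..m}" "x = r s/2"
      | i j where "i\<in>{1..m}" "j\<in>{1..m}" "i\<noteq>j" "x = (dist (c i) (c j) - r i - r j) / 4"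
    proof -
      have "x = \<epsilon>/2 \<or> x \<in> (\<lambda>s. r s / 2) ` {1..m} \<or>
        x \<in> (\<lambda>(i,j). (dist (c i) (c j) - r i - r j) / 4) ` {(i,j). i \<in> {1..m} \<and> j \<in> {1..m} \<and> i \<noteq> j}"
        using xE unfolding E_def by simp
      then show thesis using that by (elim disjE imageE) (auto split: prod.splits)
    qed
    then show "x > 0"
    proof cases
      case 1 then show ?thesis using e(1) by simp
    next
      case 2 then show ?thesis using rpos[of s] by simp
    next
      case 3 then show ?thesis using dist_centres[of i j] by simp
    qed
  qed
  define \<delta> where "\<delta> = Min E"
  have d0: "\<delta> > 0" unfolding \<delta>_def using fE nE pE by (simp add: Min_gr_iff)
  have dle: "\<delta> \<le> x" if "x \<in> E" for x unfolding \<delta>_def using fE that by simp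
  have "\<epsilon>/2 \<in> E" unfolding E_def by (intro UnI1) simp
  then have d1: "\<delta> \<le> \<epsilon>/2" using dle by blast
  have d2: "\<delta> < r s" if "s \<in> {1..m}" for s
  proof -
    have "r s / 2 \<in> E" unfolding E_def using that by (intro UnI1 UnI2 imageI)
    then have "\<delta> \<le> r s / 2" using dle by blast
    then show ?thesis using rpos[OF that] by linarith
  qed
  have d3: "r i + r j + 2 * \<delta> < dist (c i) (c j)" if "i \<in> {1..m}" "j \<in> {1..m}" "i \<noteq> j" for i j
  proof -
    have "(dist (c i) (c j) - r i - r j) / 4 \<in> E" unfolding E_def
      by (rule UnI2, rule image_eqI[of _ _ "(i,j)"]) (use that in auto)
    then have "\<delta> \<le> (dist (c i) (c j) - r i - r j) / 4" using dle by blast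
    then have "4 * \<delta> \<le> dist (c i) (c j) - r i - r j" by simp
    then show ?thesis using dist_centres[OF that] d0 by linarith
  qed
  have d4: "w \<in> U" if s: "s \<in> {1..m}" and w1: "r s - \<delta> \<le> norm (w - c s)" and w2: "norm (w - c s) \<le> r s + \<delta>" for s w
  proof -
    define n where "n = norm (w - c s)"
    have n0: "n > 0" using w1 d2[OF s] unfolding n_def by linarith
    define p where "p = c s + of_real (r s / n) * (w - c s)"
    have "norm (p - c s) = r s" using n0 rpos[OF s] by (simp add: p_def norm_mult norm_divide n_def)
    then have pC: "p \<in> C" using s by (auto simp: C_def' dist_norm norm_minus_commute)
    have "w - p = of_real (1 - r s / n) * (w - c s)" by (simp add: p_def algebra_simps)
    then have "norm (w - p) = norm (complex_of_real (1 - r s / n)) * norm (w - c s)" by (simp only: norm_mult)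
    also have "\<dots> = \<bar>1 - r s / n\<bar> * n" by (simp only: norm_of_real n_def)
    also have "\<dots> = \<bar>n - r s\<bar>" using n0 by (simp add: field_simps abs_mult[symmetric] abs_of_pos)
    also have "\<dots> \<le> \<delta>" using w1 w2 unfolding n_def by linarith
    finally have "dist p w < \<epsilon>" using d1 e(1) d0 by (simp add: dist_norm norm_minus_commute)
    then have "w \<in> ball p \<epsilon>" by simp
    then show ?thesis using e(2) pC by blast
  qed
  show ?thesis using that d0 d2 d3 d4 by blast
qed

end


context circs begin
definition ci :: "(complex \<Rightarrow> complex) \<Rightarrow> nat \<Rightarrow> real \<Rightarrow> complex \<Rightarrow> complex" where
  "ci f s \<rho> z = contour_integral (circlepath (c s) \<rho>) (\<lambda>p. f p / (p - z))"

lemma dn: "dist a b = norm (b - a)" for a b :: complex by (simp add: dist_norm norm_minus_commute)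

lemma decomp_exists:
  assumes "holo_near c r m f"
  obtains gp gm where "is_plus_part c r m f gp" "is_minus_part c r m f gm"
    "eventually (\<lambda>z. gp z + gm z = f z) near"
proof -
  obtain U where U: "open U" "C \<subseteq> U" "f holomorphic_on U" using assms unfolding holo_near_def by blast
  obtain \<delta> where d0: "\<delta> > 0" and dr: "\<And>s. s \<in> {1..m} \<Longrightarrow> \<delta> < r s"
    and dU: "\<And>s w. s \<in> {1..m} \<Longrightarrow> r s - \<delta> \<le> norm (w - c s) \<Longrightarrow> norm (w - c s) \<le> r s + \<delta> \<Longrightarrow> w \<in> U"
    and dd: "\<And>i j. i \<in> {1..m} \<Longrightarrow> j \<in> {1..m} \<Longrightarrow> i \<noteq> j \<Longrightarrow> r i + r j + 2 * \<delta> < dist (c i) (c j)"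
    using geo[OF U(1,2)] by blast
  define \<rho> where "\<rho> s = r s - \<delta>/2" for s
  define R where "R s = r s + \<delta>/2" for s
  define k :: complex where "k = 1 / (2 * of_real pi * \<i>)"
  have fc: "continuous_on U f" using U(3) holomorphic_on_imp_continuous_on by blast
  have ann: "w \<in> U" if "s \<in> {1..m}" "\<rho> s \<le> norm (w - c s)" "norm (w - c s) \<le> R s" for s w
    using dU[OF that(1)] that d0 unfolding \<rho>_def R_def by auto
  have rp: "0 < \<rho> s" "\<rho> s < r s" "r s < R s" if "s \<in> {1..m}" for s
    using dr[OF that] d0 unfolding \<rho>_def R_def by auto
  have sph: "sphere (c s) (\<rho> s) \<subseteq> U" "sphere (c s) (R s) \<subseteq> U" if "s \<in> {1..m}" for s
    using ann[OF that] rp[OF that] by (auto simp: dn)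
  have hO: "ci f s (\<rho> s) holomorphic_on - sphere (c s) (\<rho> s)" if "s \<in> {1..m}" for s
    unfolding ci_def[abs_def] using cauchy_holo[OF continuous_on_subset[OF fc sph(1)[OF that]] rp(1)[OF that]] by simp
  have hI: "ci f s (R s) holomorphic_on - sphere (c s) (R s)" if "s \<in> {1..m}" for s
    unfolding ci_def[abs_def] using cauchy_holo[OF continuous_on_subset[OF fc sph(2)[OF that]]] rp[OF that] by simp
  have sep: "R s < dist (c s) z" if "s \<in> {1..m}" "j \<in> {1..m}" "s \<noteq> j" "dist (c j) z \<le> R j" for s j z
  proof -
    have "r s + r j + 2 * \<delta> < dist (c s) (c j)" using dd that by blast
    moreover have "dist (c s) (c j) \<le> dist (c s) z + dist (c j) z" by (metis dist_commute dist_triangle)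
    ultimately show ?thesis using that(4) d0 unfolding R_def by linarith
  qed
  have cin: "ci f s (r s) z = ci f s (R s) z" if "s \<in> {1..m}" "dist (c s) z < r s" for s z
    unfolding ci_def
    by (rule circ_in[OF U(1,3)]) (use rp[OF that(1)] ann[OF that(1)] that(2) in \<open>auto simp: dn\<close>)
  have cout: "ci f s (r s) z = ci f s (\<rho> s) z" if "s \<in> {1..m}" "dist (c s) z > r s" for s z
    unfolding ci_def
    by (rule circ_out[OF U(1,3)]) (use rp[OF that(1)] ann[OF that(1)] that(2) in \<open>auto simp: dn\<close>)
  have cjump: "ci f s (R s) z - ci f s (\<rho> s) z = 2 * of_real pi * \<i> * f z"
    if "s \<in> {1..m}" "\<rho> s < dist (c s) z" "dist (c s) z < R s" for s z
    unfolding ci_def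
    by (rule circ_jump[OF U(1,3)]) (use rp[OF that(1)] ann[OF that(1)] that(2,3) in \<open>auto simp: dn\<close>)
  define gm where "gm z = - (k * (\<Sum>s\<in>{1..m}. ci f s (\<rho> s) z))" for z
  define T where "T s z = (if z \<in> ball (c s) (R s) then ci f s (R s) z else ci f s (\<rho> s) z)" for s z
  define gp where "gp z = k * (\<Sum>s\<in>{1..m}. T s z)" for z
  have gp_loc: "gp z = k * (ci f j (R j) z + (\<Sum>s\<in>{1..m}-{j}. ci f s (\<rho> s) z))"
    if "j \<in> {1..m}" "z \<in> ball (c j) (R j)" for j z
  proof -
    have "(\<Sum>s\<in>{1..m}. T s z) = T j z + (\<Sum>s\<in>{1..m}-{j}. T s z)"
      using that(1) by (simp add: sum.remove)
    also have "(\<Sum>s\<in>{1..m}-{j}. T s z) = (\<Sum>s\<in>{1..m}-{j}. ci f s (\<rho> s) z)"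
    proof (rule sum.cong)
      fix s assume "s \<in> {1..m} - {j}"
      then have "R s < dist (c s) z" using sep[of s j z] that by auto
      then show "T s z = ci f s (\<rho> s) z" unfolding T_def by auto
    qed simp
    finally show ?thesis using that(2) unfolding gp_def T_def by simp
  qed
  have gm_loc: "gm z = - (k * (ci f j (\<rho> j) z + (\<Sum>s\<in>{1..m}-{j}. ci f s (\<rho> s) z)))"
    if "j \<in> {1..m}" for j z
    using that unfolding gm_def by (simp add: sum.remove)
  have ci_loc: "cauchy_int c r m f z = k * (ci f j (r j) z + (\<Sum>s\<in>{1..m}-{j}. ci f s (r s) z))"
    if "j \<in> {1..m}" for j z
    using that unfolding cauchy_int_def ci_def k_def by (simp add: sum.remove)
  define Vm where "Vm = - (\<Union>s\<in>{1..m}. cball (c s) (\<rho> s))"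
  have Vm_open: "open Vm" unfolding Vm_def by (intro open_Compl closed_UN) auto
  have C_Vm: "C \<subseteq> Vm"
  proof
    fix z assume "z \<in> C"
    then obtain j where j: "j \<in> {1..m}" "z \<in> sphere (c j) (r j)" unfolding C_def' by blast
    have "z \<notin> cball (c s) (\<rho> s)" if s: "s \<in> {1..m}" for s
    proof (cases "s = j")
      case True then show ?thesis using j rp[OF s] by auto
    next
      case False
      show ?thesis
      proof
        assume "z \<in> cball (c s) (\<rho> s)"
        then have "z \<in> cball (c j) (r j) \<inter> cball (c s) (r s)" using j rp[OF s] by auto
        then show False using disj[OF j(1) s] False by auto
      qed
    qed
    then show "z \<in> Vm" unfolding Vm_def by blast
  qed
  have nDk_Vm: "- Dk \<subseteq> Vm"
  proof
    fix z assume "z \<in> - Dk"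
    then have "z \<notin> cball (c s) (\<rho> s)" if s: "s \<in> {1..m}" for s
    proof -
      have "z \<notin> cball (c s) (r s)" using \<open>z \<in> - Dk\<close> s unfolding Dk_def' by blast
      then show ?thesis using rp[OF s] by auto
    qed
    then show "z \<in> Vm" unfolding Vm_def by blast
  qed
  have "gm holomorphic_on Vm"
  proof -
    have "(\<lambda>z. ci f s (\<rho> s) z) holomorphic_on Vm" if s: "s \<in> {1..m}" for s
    proof (rule holomorphic_on_subset[OF hO[OF s]])
      have "Vm \<subseteq> - cball (c s) (\<rho> s)" unfolding Vm_def using s by blast
      then show "Vm \<subseteq> - sphere (c s) (\<rho> s)" using sphere_cball by blast
    qed
    then show ?thesis unfolding gm_def[abs_def] by (intro holomorphic_intros) auto
  qed
  then have "gm holomorphic_on (Vm \<union> - Dk)" using nDk_Vm by (simp add: Un_absorb2)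
  moreover have "gm z = - cauchy_int c r m f z" if "z \<in> - Dk" for z
  proof -
    have "ci f s (r s) z = ci f s (\<rho> s) z" if s: "s \<in> {1..m}" for s
    proof -
      have "z \<notin> cball (c s) (r s)" using \<open>z \<in> - Dk\<close> s unfolding Dk_def' by blast
      then show ?thesis by (intro cout[OF s]) auto
    qed
    then show ?thesis unfolding gm_def cauchy_int_def ci_def[symmetric] k_def by simp
  qed
  ultimately have mp: "is_minus_part c r m f gm"
    unfolding is_minus_part_def using Vm_open C_Vm by blast
  define Vp where "Vp = (\<Union>j\<in>{1..m}. ball (c j) (R j))"
  have Vp_open: "open Vp" unfolding Vp_def by auto
  have C_Vp: "C \<subseteq> Vp"
  proof
    fix z assume "z \<in> C"
    then obtain j where j: "j \<in> {1..m}" "z \<in> sphere (c j) (r j)" unfolding C_def' by blast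
    then have "z \<in> ball (c j) (R j)" using rp[OF j(1)] by auto
    then show "z \<in> Vp" unfolding Vp_def using j(1) by blast
  qed
  have Di_Vp: "Di \<subseteq> Vp"
  proof
    fix z assume "z \<in> Di"
    then obtain j where j: "j \<in> {1..m}" "z \<in> ball (c j) (r j)" unfolding Di_def' by blast
    then have "z \<in> ball (c j) (R j)" using rp[OF j(1)] by auto
    then show "z \<in> Vp" unfolding Vp_def using j(1) by blast
  qed
  have "gp holomorphic_on Vp" unfolding Vp_def
  proof (rule holomorphic_on_UN_open)
    fix j assume j: "j \<in> {1..m}"
    define H where "H z = k * (ci f j (R j) z + (\<Sum>s\<in>{1..m}-{j}. ci f s (\<rho> s) z))" for z
    have h1: "ci f j (R j) holomorphic_on ball (c j) (R j)"
      by (rule holomorphic_on_subset[OF hI[OF j]]) auto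
    have h2: "ci f s (\<rho> s) holomorphic_on ball (c j) (R j)" if s: "s \<in> {1..m} - {j}" for s
    proof (rule holomorphic_on_subset[OF hO])
      show "s \<in> {1..m}" using s by auto
      show "ball (c j) (R j) \<subseteq> - sphere (c s) (\<rho> s)"
      proof
        fix z assume "z \<in> ball (c j) (R j)"
        then have "R s < dist (c s) z" using sep[of s j z] s j by auto
        then show "z \<in> - sphere (c s) (\<rho> s)" using rp[of s] s by auto
      qed
    qed
    have "H holomorphic_on ball (c j) (R j)"
      unfolding H_def[abs_def] using h1 h2 by (intro holomorphic_intros) auto
    then show "gp holomorphic_on ball (c j) (R j)"
      by (rule holomorphic_transform) (use gp_loc[OF j] H_def in auto)
  qed auto
  then have "gp holomorphic_on (Vp \<union> Di)" using Di_Vp by (simp add: Un_absorb2)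
  moreover have "gp z = cauchy_int c r m f z" if zD: "z \<in> Di" for z
  proof -
    obtain j where j: "j \<in> {1..m}" "z \<in> ball (c j) (r j)" using zD unfolding Di_def' by blast
    have zR: "z \<in> ball (c j) (R j)" using j rp[OF j(1)] by auto
    have "ci f s (r s) z = ci f s (\<rho> s) z" if s: "s \<in> {1..m} - {j}" for s
    proof (rule cout)
      show "s \<in> {1..m}" using s by auto
      have "R s < dist (c s) z" using sep[of s j z] s j zR by auto
      then show "r s < dist (c s) z" using rp[of s] s by auto
    qed
    then have "(\<Sum>s\<in>{1..m}-{j}. ci f s (r s) z) = (\<Sum>s\<in>{1..m}-{j}. ci f s (\<rho> s) z)"
      by (rule sum.cong[OF refl])
    then show ?thesis using gp_loc[OF j(1) zR] ci_loc[OF j(1)] cin[OF j(1)] j(2) by simp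
  qed
  ultimately have pp: "is_plus_part c r m f gp"
    unfolding is_plus_part_def using Vp_open C_Vp by blast
  define W where "W = (\<Union>j\<in>{1..m}. ball (c j) (R j) \<inter> - cball (c j) (\<rho> j))"
  have "open W" unfolding W_def by (intro open_UN ballI open_Int) auto
  moreover have "C \<subseteq> W"
  proof
    fix z assume "z \<in> C"
    then obtain j where j: "j \<in> {1..m}" "z \<in> sphere (c j) (r j)" unfolding C_def' by blast
    then have "z \<in> ball (c j) (R j) \<inter> - cball (c j) (\<rho> j)" using rp[OF j(1)] by auto
    then show "z \<in> W" unfolding W_def using j(1) by blast
  qed
  moreover have "gp z + gm z = f z" if zW: "z \<in> W" for z
  proof -
    obtain j where j: "j \<in> {1..m}" "z \<in> ball (c j) (R j)" "z \<notin> cball (c j) (\<rho> j)"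
      using zW unfolding W_def by blast
    have "gp z + gm z = k * (ci f j (R j) z - ci f j (\<rho> j) z)"
      unfolding gp_loc[OF j(1,2)] gm_loc[OF j(1), of z] by (simp add: algebra_simps)
    also have "\<dots> = k * (2 * of_real pi * \<i> * f z)"
      using cjump[OF j(1)] j(2,3) by auto
    also have "\<dots> = f z" unfolding k_def by simp
    finally show ?thesis .
  qed
  ultimately have "eventually (\<lambda>z. gp z + gm z = f z) near"
    unfolding eventually_near by blast
  then show ?thesis using that pp mp by blast
qed

end


lemma deriv_local:
  assumes "g holomorphic_on S" "open S" "x \<in> S" "\<And>y. y \<in> S \<Longrightarrow> g y = h y"
  shows "\<exists>f'. (h has_field_derivative f') (at x)"
proof -
  obtain f' where "(g has_field_derivative f') (at x)"
    using assms(1,2,3) holomorphic_on_open by blast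
  then have "(h has_field_derivative f') (at x)"
    by (rule has_field_derivative_transform_within_open[OF _ assms(2,3) assms(4)])
  then show ?thesis by blast
qed

context circs begin

definition PlusT :: "(complex \<Rightarrow> complex) \<Rightarrow> bool" where
  "PlusT g \<longleftrightarrow> (\<exists>U. open U \<and> Dk \<subseteq> U \<and> g holomorphic_on U)"
definition MinusT :: "(complex \<Rightarrow> complex) \<Rightarrow> bool" where
  "MinusT g \<longleftrightarrow> (\<exists>U. open U \<and> - Di \<subseteq> U \<and> g holomorphic_on U) \<and> (g \<longlongrightarrow> 0) at_infinity"

abbreviation "hn \<equiv> holo_near c r m"

lemma ev_near_inf: "eventually (\<lambda>z. z \<in> - Dk) at_infinity"
proof -
  obtain B where B: "\<And>x. x \<in> Dk \<Longrightarrow> norm x \<le> B" using bounded_Dk bounded_iff by blast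
  show ?thesis unfolding eventually_at_infinity
    by (rule exI[of _ "B + 1"]) (use B in force)
qed

lemma ident_local:
  assumes "K holomorphic_on Om" "open Om" "z0 \<in> Om" "open Z" "z0 \<in> closure Z" "\<And>z. z \<in> Z \<Longrightarrow> z \<in> Om \<Longrightarrow> K z = 0"
  shows "\<exists>e>0. \<forall>y\<in>ball z0 e. K y = 0"
proof -
  obtain e where e: "e > 0" "ball z0 e \<subseteq> Om" using assms(2,3) open_contains_ball by blast
  have "z0 \<in> ball z0 e" using e(1) by simp
  then have "ball z0 e \<inter> closure Z \<noteq> {}" using assms(5) by blast
  then have ne: "ball z0 e \<inter> Z \<noteq> {}" using open_Int_closure_eq_empty[of "ball z0 e" Z] by auto
  have hb: "K holomorphic_on ball z0 e" using assms(1) e(2) holomorphic_on_subset by blast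
  have kz: "\<And>z. z \<in> ball z0 e \<inter> Z \<Longrightarrow> K z = 0" using assms(6) e(2) by blast
  have "K y = (\<lambda>_. 0) y" if y: "y \<in> ball z0 e" for y
    by (rule analytic_continuation_open[where s = "ball z0 e \<inter> Z" and s' = "ball z0 e"])
       (use assms(4) ne y hb kz in auto)
  then show ?thesis using e(1) by blast
qed

lemma ev_from_local:
  assumes "\<And>z0. z0 \<in> C \<Longrightarrow> \<exists>e>0. \<forall>y\<in>ball z0 e. P y"
  shows "eventually P near"
  unfolding eventually_near
proof (intro exI conjI)
  show "open (interior {y. P y})" by simp
  show "C \<subseteq> interior {y. P y}"
  proof
    fix z0 assume "z0 \<in> C"
    then obtain e where "e > 0" "\<forall>y\<in>ball z0 e. P y" using assms by blast
    then show "z0 \<in> interior {y. P y}" unfolding mem_interior by blast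
  qed
  show "\<forall>z\<in>interior {y. P y}. P z" using interior_subset by blast
qed

lemma plus_unique:
  assumes "is_plus_part c r m f g1" "is_plus_part c r m f g2"
  shows "eventually (\<lambda>z. g1 z = g2 z) near"
proof -
  obtain V1 where V1: "open V1" "C \<subseteq> V1" "g1 holomorphic_on (V1 \<union> Di)" "\<forall>z\<in>Di. g1 z = cauchy_int c r m f z"
    using assms(1) unfolding is_plus_part_def by blast
  obtain V2 where V2: "open V2" "C \<subseteq> V2" "g2 holomorphic_on (V2 \<union> Di)" "\<forall>z\<in>Di. g2 z = cauchy_int c r m f z"
    using assms(2) unfolding is_plus_part_def by blast
  define Om where "Om = (V1 \<union> Di) \<inter> (V2 \<union> Di)"
  have Omo: "open Om" unfolding Om_def using V1(1) V2(1) open_Di by auto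
  have hK: "(\<lambda>z. g1 z - g2 z) holomorphic_on Om"
    unfolding Om_def by (rule holomorphic_on_diff[OF holomorphic_on_subset[OF V1(3)] holomorphic_on_subset[OF V2(3)]]) auto
  have "\<exists>e>0. \<forall>y\<in>ball z0 e. g1 y - g2 y = 0" if z0: "z0 \<in> C" for z0
  proof -
    obtain j where j: "j \<in> {1..m}" "z0 \<in> sphere (c j) (r j)" using z0 unfolding C_def' by blast
    show ?thesis
    proof (rule ident_local[OF hK Omo _ open_ball])
      show "z0 \<in> Om" using z0 V1(2) V2(2) unfolding Om_def by blast
      show "z0 \<in> closure (ball (c j) (r j))" using j rpos[OF j(1)] by simp
      show "g1 z - g2 z = 0" if "z \<in> ball (c j) (r j)" for z
      proof -
        have "z \<in> Di" using that j(1) unfolding Di_def' by blast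
        then show ?thesis using V1(4) V2(4) by simp
      qed
    qed
  qed
  then show ?thesis by (intro ev_from_local) auto
qed

lemma closure_ext:
  assumes j: "j \<in> {1..m}" and z0: "z0 \<in> sphere (c j) (r j)"
  shows "z0 \<in> closure (- Dk)"
proof -
  define Q where "Q = (\<Union>s\<in>{1..m}-{j}. cball (c s) (r s))"
  have "closed Q" unfolding Q_def by (intro closed_UN) auto
  moreover have "z0 \<notin> Q"
  proof
    assume "z0 \<in> Q"
    then obtain s where s: "s \<in> {1..m}" "s \<noteq> j" "z0 \<in> cball (c s) (r s)" unfolding Q_def by blast
    then have "z0 \<in> cball (c j) (r j) \<inter> cball (c s) (r s)" using z0 by auto
    then show False using disj[OF j s(1)] s(2) by auto
  qed
  ultimately obtain e0 where e0: "e0 > 0" "ball z0 e0 \<subseteq> - Q"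
    using open_contains_ball[of "- Q"] by (metis ComplI open_Compl)
  have rj: "r j > 0" using rpos[OF j] .
  show ?thesis unfolding closure_approachable
  proof (intro allI impI)
    fix \<epsilon> :: real assume \<epsilon>: "\<epsilon> > 0"
    define t where "t = min \<epsilon> e0 / 2"
    have t: "t > 0" "t < \<epsilon>" "t < e0" using \<epsilon> e0 by (auto simp: t_def)
    define y where "y = z0 + of_real (t / r j) * (z0 - c j)"
    have nz: "norm (z0 - c j) = r j" using z0 by (simp add: dist_norm norm_minus_commute)
    have "y - c j = of_real (1 + t / r j) * (z0 - c j)" by (simp add: y_def algebra_simps)
    then have "norm (y - c j) = norm (complex_of_real (1 + t / r j)) * norm (z0 - c j)"
      by (simp only: norm_mult)
    also have "\<dots> = \<bar>1 + t / r j\<bar> * r j" by (simp only: norm_of_real nz)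
    also have "\<dots> = (1 + t / r j) * r j" using t rj by simp
    also have "\<dots> = r j + t" using rj by (simp add: field_simps)
    finally have yj: "y \<notin> cball (c j) (r j)" using t by (simp add: dist_norm norm_minus_commute)
    have "y - z0 = of_real (t / r j) * (z0 - c j)" by (simp add: y_def algebra_simps)
    then have "norm (y - z0) = norm (complex_of_real (t / r j)) * norm (z0 - c j)"
      by (simp only: norm_mult)
    also have "\<dots> = \<bar>t / r j\<bar> * r j" by (simp only: norm_of_real nz)
    also have "\<dots> = t" using t rj by simp
    finally have dy: "dist y z0 = t" by (simp add: dist_norm)
    then have "y \<in> ball z0 e0" using t by (simp add: dist_commute)
    then have "y \<notin> Q" using e0 by blast
    then have "y \<in> - Dk" using yj unfolding Q_def Dk_def' by blast
    then show "\<exists>y\<in>- Dk. dist y z0 < \<epsilon>" using dy t by blast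
  qed
qed

lemma minus_unique:
  assumes "is_minus_part c r m f g1" "is_minus_part c r m f g2"
  shows "eventually (\<lambda>z. g1 z = g2 z) near"
proof -
  obtain V1 where V1: "open V1" "C \<subseteq> V1" "g1 holomorphic_on (V1 \<union> - Dk)" "\<forall>z\<in>- Dk. g1 z = - cauchy_int c r m f z"
    using assms(1) unfolding is_minus_part_def by blast
  obtain V2 where V2: "open V2" "C \<subseteq> V2" "g2 holomorphic_on (V2 \<union> - Dk)" "\<forall>z\<in>- Dk. g2 z = - cauchy_int c r m f z"
    using assms(2) unfolding is_minus_part_def by blast
  define Om where "Om = (V1 \<union> - Dk) \<inter> (V2 \<union> - Dk)"
  have oDk: "open (- Dk)" using closed_Dk by auto
  have Omo: "open Om" unfolding Om_def using V1(1) V2(1) oDk by auto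
  have hK: "(\<lambda>z. g1 z - g2 z) holomorphic_on Om"
    unfolding Om_def by (rule holomorphic_on_diff[OF holomorphic_on_subset[OF V1(3)] holomorphic_on_subset[OF V2(3)]]) auto
  have "\<exists>e>0. \<forall>y\<in>ball z0 e. g1 y - g2 y = 0" if z0: "z0 \<in> C" for z0
  proof -
    obtain j where j: "j \<in> {1..m}" "z0 \<in> sphere (c j) (r j)" using z0 unfolding C_def' by blast
    show ?thesis
    proof (rule ident_local[OF hK Omo _ oDk])
      show "z0 \<in> Om" using z0 V1(2) V2(2) unfolding Om_def by blast
      show "z0 \<in> closure (- Dk)" by (rule closure_ext[OF j])
      show "g1 z - g2 z = 0" if "z \<in> - Dk" for z using that V1(4) V2(4) by simp
    qed
  qed
  then show ?thesis by (intro ev_from_local) auto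
qed

end


context circs begin
lemma parts:
  assumes "hn f"
  shows "is_plus_part c r m f (pplus c r m f)" "is_minus_part c r m f (pminus c r m f)"
    "eventually (\<lambda>z. pplus c r m f z + pminus c r m f z = f z) near"
proof -
  obtain gp gm where g: "is_plus_part c r m f gp" "is_minus_part c r m f gm"
    "eventually (\<lambda>z. gp z + gm z = f z) near"
    using decomp_exists[OF assms] by blast
  show p: "is_plus_part c r m f (pplus c r m f)" unfolding pplus_def by (rule someI[where P = "is_plus_part c r m f", OF g(1)])
  show n: "is_minus_part c r m f (pminus c r m f)" unfolding pminus_def by (rule someI[where P = "is_minus_part c r m f", OF g(2)])
  have e1: "eventually (\<lambda>z. pplus c r m f z = gp z) near" by (rule plus_unique[OF p g(1)])
  have e2: "eventually (\<lambda>z. pminus c r m f z = gm z) near" by (rule minus_unique[OF n g(2)])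
  show "eventually (\<lambda>z. pplus c r m f z + pminus c r m f z = f z) near"
    using e1 e2 g(3) by eventually_elim auto
qed

lemma PlusT_P: assumes "hn f" shows "PlusT (pplus c r m f)"
proof -
  obtain V where V: "open V" "C \<subseteq> V" "pplus c r m f holomorphic_on (V \<union> Di)"
    using parts(1)[OF assms] unfolding is_plus_part_def by blast
  have "Dk \<subseteq> V \<union> Di" using V(2) Dk_eq by auto
  moreover have "open (V \<union> Di)" using V(1) open_Di by (rule open_Un)
  ultimately show ?thesis unfolding PlusT_def using V(3) by blast
qed

lemma MinusT_N: assumes "hn f" shows "MinusT (pminus c r m f)"
proof -
  obtain V where V: "open V" "C \<subseteq> V" "pminus c r m f holomorphic_on (V \<union> - Dk)"
    and eq: "\<forall>z\<in>- Dk. pminus c r m f z = - cauchy_int c r m f z"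
    using parts(2)[OF assms] unfolding is_minus_part_def by blast
  have "- Di \<subseteq> V \<union> - Dk" using V(2) Dk_eq by auto
  moreover have "open (V \<union> - Dk)" using V(1) closed_Dk by auto
  moreover have "(pminus c r m f \<longlongrightarrow> 0) at_infinity"
  proof -
    obtain U where U: "open U" "C \<subseteq> U" "f holomorphic_on U" using assms unfolding holo_near_def by blast
    have fc: "continuous_on (sphere (c s) (r s)) f" if s: "s \<in> {1..m}" for s
    proof (rule continuous_on_subset[OF holomorphic_on_imp_continuous_on[OF U(3)]])
      show "sphere (c s) (r s) \<subseteq> U" using U(2) s unfolding C_def' by blast
    qed
    have "((\<lambda>z. - cauchy_int c r m f z) \<longlongrightarrow> - 0) at_infinity"
      unfolding cauchy_int_def
      by (intro tendsto_minus tendsto_mult_right_zero tendsto_null_sum circ_tendsto fc rpos)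
    then have "((\<lambda>z. - cauchy_int c r m f z) \<longlongrightarrow> 0) at_infinity" by simp
    moreover have "eventually (\<lambda>z. - cauchy_int c r m f z = pminus c r m f z) at_infinity"
      using ev_near_inf by eventually_elim (use eq in auto)
    ultimately show ?thesis by (rule Lim_transform_eventually)
  qed
  ultimately show ?thesis unfolding MinusT_def using V(3) by blast
qed

lemma uniq:
  assumes "PlusT A" "MinusT B" "eventually (\<lambda>z. A z + B z = 0) near"
  shows "eventually (\<lambda>z. A z = 0) near" "eventually (\<lambda>z. B z = 0) near"
proof -
  obtain UA where UA: "open UA" "Dk \<subseteq> UA" "A holomorphic_on UA" using assms(1) unfolding PlusT_def by blast
  obtain UB where UB: "open UB" "- Di \<subseteq> UB" "B holomorphic_on UB" and Bl: "(B \<longlongrightarrow> 0) at_infinity"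
    using assms(2) unfolding MinusT_def by blast
  obtain U0 where U0: "open U0" "C \<subseteq> U0" "\<forall>z\<in>U0. A z + B z = 0" using assms(3) unfolding eventually_near by blast
  define Om where "Om = U0 \<inter> UA \<inter> UB"
  have Omo: "open Om" unfolding Om_def using U0 UA UB by auto
  have COm: "C \<subseteq> Om" unfolding Om_def using U0(2) UA(2) UB(2) C_sub_Dk C_sub_nDi by blast
  define H where "H z = (if z \<in> Dk then A z else - B z)" for z
  have HA: "H z = A z" if "z \<in> Om" for z
  proof (cases "z \<in> Dk")
    case False
    then have "A z + B z = 0" using that U0(3) unfolding Om_def by blast
    then show ?thesis using False unfolding H_def by (simp add: add_eq_0_iff)
  qed (simp add: H_def)
  have hol: "H holomorphic_on UNIV"
    unfolding holomorphic_on_open[OF open_UNIV]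
  proof
    fix x :: complex
    consider "x \<in> Di" | "x \<in> - Dk" | "x \<in> C" using Dk_eq by blast
    then show "\<exists>f'. (H has_field_derivative f') (at x)"
    proof cases
      case 1
      show ?thesis
      proof (rule deriv_local[OF _ open_Di 1])
        show "A holomorphic_on Di" using UA Di_sub_Dk holomorphic_on_subset by blast
        show "A y = H y" if "y \<in> Di" for y using that Di_sub_Dk unfolding H_def by auto
      qed
    next
      case 2
      have o: "open (- Dk)" using closed_Dk by auto
      show ?thesis
      proof (rule deriv_local[OF _ o 2])
        have "- Dk \<subseteq> UB" using UB(2) Di_sub_Dk by auto
        then show "(\<lambda>z. - B z) holomorphic_on - Dk" using UB(3) by (intro holomorphic_intros) (rule holomorphic_on_subset)
        show "- B y = H y" if "y \<in> - Dk" for y using that unfolding H_def by auto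
      qed
    next
      case 3
      show ?thesis
      proof (rule deriv_local[OF _ Omo])
        show "A holomorphic_on Om" using UA(3) unfolding Om_def by (rule holomorphic_on_subset) auto
        show "x \<in> Om" using 3 COm by blast
        show "A y = H y" if "y \<in> Om" for y using HA[OF that] by simp
      qed
    qed
  qed
  have "((\<lambda>z. - B z) \<longlongrightarrow> 0) at_infinity" using tendsto_minus[OF Bl] by simp
  moreover have "eventually (\<lambda>z. - B z = H z) at_infinity"
    using ev_near_inf by eventually_elim (auto simp: H_def)
  ultimately have "(H \<longlongrightarrow> 0) at_infinity" by (rule Lim_transform_eventually)
  then have H0: "H z = 0" for z using Liouville_weak_0[OF hol] by blast
  show "eventually (\<lambda>z. A z = 0) near" unfolding eventually_near
  proof (intro exI conjI ballI)
    fix z assume z: "z \<in> Om"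
    show "A z = 0" using HA[OF z] H0[of z] by simp
  qed (use Omo COm in auto)
  show "eventually (\<lambda>z. B z = 0) near" unfolding eventually_near
  proof (intro exI conjI ballI)
    fix z assume z: "z \<in> Om"
    then have "A z + B z = 0" using U0(3) unfolding Om_def by blast
    then show "B z = 0" using HA[OF z] H0[of z] by simp
  qed (use Omo COm in auto)
qed

lemma PlusT_add: "PlusT f \<Longrightarrow> PlusT g \<Longrightarrow> PlusT (\<lambda>z. f z + g z)"
proof -
  assume a: "PlusT f" "PlusT g"
  obtain U1 where "open U1" "Dk \<subseteq> U1" "f holomorphic_on U1" using a(1) unfolding PlusT_def by blast
  moreover obtain U2 where "open U2" "Dk \<subseteq> U2" "g holomorphic_on U2" using a(2) unfolding PlusT_def by blast
  ultimately show ?thesis unfolding PlusT_def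
    by (intro exI[of _ "U1 \<inter> U2"]) (auto intro!: holomorphic_intros elim: holomorphic_on_subset)
qed
lemma PlusT_diff: "PlusT f \<Longrightarrow> PlusT g \<Longrightarrow> PlusT (\<lambda>z. f z - g z)"
proof -
  assume a: "PlusT f" "PlusT g"
  obtain U1 where "open U1" "Dk \<subseteq> U1" "f holomorphic_on U1" using a(1) unfolding PlusT_def by blast
  moreover obtain U2 where "open U2" "Dk \<subseteq> U2" "g holomorphic_on U2" using a(2) unfolding PlusT_def by blast
  ultimately show ?thesis unfolding PlusT_def
    by (intro exI[of _ "U1 \<inter> U2"]) (auto intro!: holomorphic_intros elim: holomorphic_on_subset)
qed
lemma PlusT_mult: "PlusT f \<Longrightarrow> PlusT g \<Longrightarrow> PlusT (\<lambda>z. f z * g z)"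
proof -
  assume a: "PlusT f" "PlusT g"
  obtain U1 where "open U1" "Dk \<subseteq> U1" "f holomorphic_on U1" using a(1) unfolding PlusT_def by blast
  moreover obtain U2 where "open U2" "Dk \<subseteq> U2" "g holomorphic_on U2" using a(2) unfolding PlusT_def by blast
  ultimately show ?thesis unfolding PlusT_def
    by (intro exI[of _ "U1 \<inter> U2"]) (auto intro!: holomorphic_intros elim: holomorphic_on_subset)
qed
lemma PlusT_const: "PlusT (\<lambda>z. a)"
  unfolding PlusT_def by (intro exI[of _ UNIV]) auto

lemma MinusT_add: "MinusT f \<Longrightarrow> MinusT g \<Longrightarrow> MinusT (\<lambda>z. f z + g z)"
proof -
  assume a: "MinusT f" "MinusT g"
  obtain U1 where "open U1" "- Di \<subseteq> U1" "f holomorphic_on U1" "(f \<longlongrightarrow> 0) at_infinity" using a(1) unfolding MinusT_def by blast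
  moreover obtain U2 where "open U2" "- Di \<subseteq> U2" "g holomorphic_on U2" "(g \<longlongrightarrow> 0) at_infinity" using a(2) unfolding MinusT_def by blast
  ultimately show ?thesis unfolding MinusT_def
    using tendsto_add_zero[of f at_infinity g]
    by (intro conjI exI[of _ "U1 \<inter> U2"]) (auto intro!: holomorphic_intros elim: holomorphic_on_subset)
qed
lemma MinusT_diff: "MinusT f \<Longrightarrow> MinusT g \<Longrightarrow> MinusT (\<lambda>z. f z - g z)"
proof -
  assume a: "MinusT f" "MinusT g"
  obtain U1 where "open U1" "- Di \<subseteq> U1" "f holomorphic_on U1" "(f \<longlongrightarrow> 0) at_infinity" using a(1) unfolding MinusT_def by blast
  moreover obtain U2 where "open U2" "- Di \<subseteq> U2" "g holomorphic_on U2" "(g \<longlongrightarrow> 0) at_infinity" using a(2) unfolding MinusT_def by blast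
  ultimately show ?thesis unfolding MinusT_def
    using tendsto_diff[of f 0 at_infinity g 0]
    by (intro conjI exI[of _ "U1 \<inter> U2"]) (auto intro!: holomorphic_intros elim: holomorphic_on_subset)
qed
lemma MinusT_mult: "MinusT f \<Longrightarrow> MinusT g \<Longrightarrow> MinusT (\<lambda>z. f z * g z)"
proof -
  assume a: "MinusT f" "MinusT g"
  obtain U1 where "open U1" "- Di \<subseteq> U1" "f holomorphic_on U1" "(f \<longlongrightarrow> 0) at_infinity" using a(1) unfolding MinusT_def by blast
  moreover obtain U2 where "open U2" "- Di \<subseteq> U2" "g holomorphic_on U2" "(g \<longlongrightarrow> 0) at_infinity" using a(2) unfolding MinusT_def by blast
  ultimately show ?thesis unfolding MinusT_def
    using tendsto_mult_zero[of f at_infinity g]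
    by (intro conjI exI[of _ "U1 \<inter> U2"]) (auto intro!: holomorphic_intros elim: holomorphic_on_subset)
qed
lemma MinusT_zero: "MinusT (\<lambda>z. 0)"
  unfolding MinusT_def by (intro conjI exI[of _ UNIV]) auto

lemma hn_add: "hn f \<Longrightarrow> hn g \<Longrightarrow> hn (\<lambda>z. f z + g z)"
proof -
  assume a: "hn f" "hn g"
  obtain U1 where "open U1" "C \<subseteq> U1" "f holomorphic_on U1" using a(1) unfolding holo_near_def by blast
  moreover obtain U2 where "open U2" "C \<subseteq> U2" "g holomorphic_on U2" using a(2) unfolding holo_near_def by blast
  ultimately show ?thesis unfolding holo_near_def
    by (intro exI[of _ "U1 \<inter> U2"]) (auto intro!: holomorphic_intros elim: holomorphic_on_subset)
qed
lemma hn_diff: "hn f \<Longrightarrow> hn g \<Longrightarrow> hn (\<lambda>z. f z - g z)"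
proof -
  assume a: "hn f" "hn g"
  obtain U1 where "open U1" "C \<subseteq> U1" "f holomorphic_on U1" using a(1) unfolding holo_near_def by blast
  moreover obtain U2 where "open U2" "C \<subseteq> U2" "g holomorphic_on U2" using a(2) unfolding holo_near_def by blast
  ultimately show ?thesis unfolding holo_near_def
    by (intro exI[of _ "U1 \<inter> U2"]) (auto intro!: holomorphic_intros elim: holomorphic_on_subset)
qed
lemma hn_mult: "hn f \<Longrightarrow> hn g \<Longrightarrow> hn (\<lambda>z. f z * g z)"
proof -
  assume a: "hn f" "hn g"
  obtain U1 where "open U1" "C \<subseteq> U1" "f holomorphic_on U1" using a(1) unfolding holo_near_def by blast
  moreover obtain U2 where "open U2" "C \<subseteq> U2" "g holomorphic_on U2" using a(2) unfolding holo_near_def by blast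
  ultimately show ?thesis unfolding holo_near_def
    by (intro exI[of _ "U1 \<inter> U2"]) (auto intro!: holomorphic_intros elim: holomorphic_on_subset)
qed
lemma hn_const: "hn (\<lambda>z. a)"
  unfolding holo_near_def by (intro exI[of _ UNIV]) auto
lemma PlusT_hn: "PlusT f \<Longrightarrow> hn f"
  unfolding PlusT_def holo_near_def using C_sub_Dk by blast
lemma MinusT_hn: "MinusT f \<Longrightarrow> hn f"
  unfolding MinusT_def holo_near_def using C_sub_nDi by blast
lemma hn_P: "hn f \<Longrightarrow> hn (pplus c r m f)" using PlusT_P PlusT_hn by blast
lemma hn_N: "hn f \<Longrightarrow> hn (pminus c r m f)" using MinusT_N MinusT_hn by blast

lemma lin1: "(a::complex) + b = x \<Longrightarrow> x = y + w \<Longrightarrow> a - y + (b - w) = 0"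
  by (metis add_diff_add diff_self)

lemma dec:
  assumes "hn X" "PlusT Y" "MinusT Z" "eventually (\<lambda>z. X z = Y z + Z z) near"
  shows "eventually (\<lambda>z. pplus c r m X z = Y z) near" "eventually (\<lambda>z. pminus c r m X z = Z z) near"
proof -
  have A: "PlusT (\<lambda>z. pplus c r m X z - Y z)" by (rule PlusT_diff[OF PlusT_P[OF assms(1)] assms(2)])
  have B: "MinusT (\<lambda>z. pminus c r m X z - Z z)" by (rule MinusT_diff[OF MinusT_N[OF assms(1)] assms(3)])
  have "eventually (\<lambda>z. (pplus c r m X z - Y z) + (pminus c r m X z - Z z) = 0) near"
    using parts(3)[OF assms(1)] assms(4) by eventually_elim (rule lin1)
  note u = uniq[OF A B this]
  show "eventually (\<lambda>z. pplus c r m X z = Y z) near" using u(1) by eventually_elim simp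
  show "eventually (\<lambda>z. pminus c r m X z = Z z) near" using u(2) by eventually_elim simp
qed

lemma ev_congP:
  assumes "hn X" "hn X'" "eventually (\<lambda>z. X z = X' z) near"
  shows "eventually (\<lambda>z. pplus c r m X z = pplus c r m X' z) near"
    "eventually (\<lambda>z. pminus c r m X z = pminus c r m X' z) near"
proof -
  have "eventually (\<lambda>z. X z = pplus c r m X' z + pminus c r m X' z) near"
    using assms(3) parts(3)[OF assms(2)] by eventually_elim (rule trans, assumption, rule sym)
  note d = dec[OF assms(1) PlusT_P[OF assms(2)] MinusT_N[OF assms(2)] this]
  show "eventually (\<lambda>z. pplus c r m X z = pplus c r m X' z) near" by (rule d(1))
  show "eventually (\<lambda>z. pminus c r m X z = pminus c r m X' z) near" by (rule d(2))
qed

end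




context circs begin
lemma MinusT_neg: "MinusT f \<Longrightarrow> MinusT (\<lambda>z. - f z)"
  using MinusT_diff[OF MinusT_zero, of f] by simp
end

locale alg = circs +
  fixes a ah :: "complex \<Rightarrow> complex"
  assumes ha: "holo_near c r m (deriv a)" and hah: "holo_near c r m (deriv ah)"
begin

abbreviation "Pp \<equiv> pplus c r m"
abbreviation "Nn \<equiv> pminus c r m"
abbreviation "Aw w \<equiv> (\<lambda>z. fst w z * deriv a z)"
abbreviation "Bw w \<equiv> (\<lambda>z. snd w z * deriv ah z)"
abbreviation "tw w \<equiv> (\<lambda>z. fst w z * deriv a z + snd w z * deriv ah z)"
abbreviation "sw w \<equiv> (\<lambda>z. fst w z + snd w z)"
abbreviation "Lw w \<equiv> (\<lambda>z. Pp (Aw w) z - Nn (Bw w) z)"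
abbreviation "hnw w \<equiv> hn (fst w) \<and> hn (snd w)"
abbreviation "ML \<equiv> mult c r m a ah"

lemma mult_fst: "fst (ML w1 w2) z = fst w2 z * Pp (Aw w1) z - fst w1 z * Nn (Aw w2) z - fst w2 z * Nn (Bw w1) z - fst w1 z * Nn (Bw w2) z"
  by (simp add: mult_def Let_def)
lemma mult_snd: "snd (ML w1 w2) z = snd w2 z * Pp (Bw w1) z - snd w1 z * Nn (Bw w2) z + snd w1 z * Pp (Aw w2) z + snd w2 z * Pp (Aw w1) z"
  by (simp add: mult_def Let_def)
lemma eta_fst: "fst (eta c r m a ah w) z = deriv a z * Nn (sw w) z - Nn (tw w) z"
  by (simp add: eta_def Let_def)
lemma eta_snd: "snd (eta c r m a ah w) z = - deriv ah z * Pp (sw w) z + Pp (tw w) z"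
  by (simp add: eta_def Let_def)

lemma hnA: "hnw w \<Longrightarrow> hn (Aw w)" using hn_mult ha by blast
lemma hnB: "hnw w \<Longrightarrow> hn (Bw w)" using hn_mult hah by blast
lemma hnt: "hnw w \<Longrightarrow> hn (tw w)" using hn_add hnA hnB by blast
lemma hns: "hnw w \<Longrightarrow> hn (sw w)" using hn_add by blast

lemma hnw_mult: assumes "hnw w1" "hnw w2" shows "hnw (ML w1 w2)"
proof -
  have a1: "hn (Pp (Aw w1))" "hn (Nn (Aw w1))" "hn (Pp (Bw w1))" "hn (Nn (Bw w1))"
    using hn_P hn_N hnA hnB assms(1) by blast+
  have a2: "hn (Pp (Aw w2))" "hn (Nn (Aw w2))" "hn (Pp (Bw w2))" "hn (Nn (Bw w2))"
    using hn_P hn_N hnA hnB assms(2) by blast+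
  have "hn (fst (ML w1 w2))"
    unfolding mult_fst[abs_def]
    by (intro hn_diff hn_mult a1 a2) (use assms in auto)
  moreover have "hn (snd (ML w1 w2))"
    unfolding mult_snd[abs_def]
    by (intro hn_add hn_diff hn_mult a1 a2) (use assms in auto)
  ultimately show ?thesis by blast
qed

lemma R1: assumes "hn f" shows "eventually (\<lambda>z. Pp f z = f z - Nn f z) near"
  using parts(3)[OF assms] by eventually_elim (simp add: eq_diff_eq)

lemma lin:
  assumes "hn f" "hn g"
  shows "eventually (\<lambda>z. Pp (\<lambda>z. f z + g z) z = Pp f z + Pp g z) near"
    "eventually (\<lambda>z. Nn (\<lambda>z. f z + g z) z = Nn f z + Nn g z) near"
proof -
  have "eventually (\<lambda>z. f z + g z = (Pp f z + Pp g z) + (Nn f z + Nn g z)) near"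
    using parts(3)[OF assms(1)] parts(3)[OF assms(2)] by eventually_elim (simp add: algebra_simps)
  note d = dec[OF hn_add[OF assms] PlusT_add[OF PlusT_P[OF assms(1)] PlusT_P[OF assms(2)]]
                 MinusT_add[OF MinusT_N[OF assms(1)] MinusT_N[OF assms(2)]] this]
  show "eventually (\<lambda>z. Pp (\<lambda>z. f z + g z) z = Pp f z + Pp g z) near" by (rule d(1))
  show "eventually (\<lambda>z. Nn (\<lambda>z. f z + g z) z = Nn f z + Nn g z) near" by (rule d(2))
qed


lemma M1:
  assumes w1: "hnw w1" and w2: "hnw w2"
  shows "eventually (\<lambda>z. fst (ML w1 w2) z = Lw w1 z * fst w2 z - fst w1 z * Nn (tw w2) z) near"
    "eventually (\<lambda>z. snd (ML w1 w2) z = Lw w1 z * snd w2 z + snd w1 z * Pp (tw w2) z) near"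
proof -
  note l = lin[OF hnA[OF w2] hnB[OF w2]]
  show "eventually (\<lambda>z. fst (ML w1 w2) z = Lw w1 z * fst w2 z - fst w1 z * Nn (tw w2) z) near"
    using l(2) by eventually_elim (simp only: mult_fst, simp (no_asm) add: algebra_simps)
  show "eventually (\<lambda>z. snd (ML w1 w2) z = Lw w1 z * snd w2 z + snd w1 z * Pp (tw w2) z) near"
    using l(1) R1[OF hnB[OF w1]] R1[OF hnB[OF w2]]
    by eventually_elim (simp only: mult_snd, simp (no_asm) add: algebra_simps)
qed

lemma T:
  assumes w1: "hnw w1" and w2: "hnw w2"
  shows "eventually (\<lambda>z. Pp (tw (ML w1 w2)) z = Pp (tw w1) z * Pp (tw w2) z) near"
    "eventually (\<lambda>z. Nn (tw (ML w1 w2)) z = - (Nn (tw w1) z * Nn (tw w2) z)) near"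
proof -
  have hX: "hn (tw (ML w1 w2))" by (rule hnt[OF hnw_mult[OF w1 w2]])
  note m = M1[OF w1 w2]
  note l1 = lin[OF hnA[OF w1] hnB[OF w1]]
  have "eventually (\<lambda>z. tw (ML w1 w2) z = Pp (tw w1) z * Pp (tw w2) z + (- (Nn (tw w1) z * Nn (tw w2) z))) near"
    using m(1) m(2) l1(1) l1(2) R1[OF hnA[OF w1]] R1[OF hnB[OF w1]] R1[OF hnt[OF w2]]
    by eventually_elim (simp only:, simp (no_asm) add: algebra_simps)
  note d = dec[OF hX PlusT_mult[OF PlusT_P[OF hnt[OF w1]] PlusT_P[OF hnt[OF w2]]]
      MinusT_neg[OF MinusT_mult[OF MinusT_N[OF hnt[OF w1]] MinusT_N[OF hnt[OF w2]]]] this]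
  show "eventually (\<lambda>z. Pp (tw (ML w1 w2)) z = Pp (tw w1) z * Pp (tw w2) z) near" by (rule d(1))
  show "eventually (\<lambda>z. Nn (tw (ML w1 w2)) z = - (Nn (tw w1) z * Nn (tw w2) z)) near" by (rule d(2))
qed


lemma K2:
  assumes w1: "hnw w1" and w2: "hnw w2"
  shows "eventually (\<lambda>z. Lw (ML w1 w2) z = Lw w1 z * Lw w2 z) near"
proof -
  have hu: "hnw (ML w1 w2)" by (rule hnw_mult[OF w1 w2])
  define X1 where "X1 = (\<lambda>z. Nn (Bw w1) z * Pp (Aw w2) z)"
  define X2 where "X2 = (\<lambda>z. Pp (Aw w1) z * Nn (Bw w2) z)"
  have hX1: "hn X1" unfolding X1_def by (intro hn_mult hn_P hn_N hnA hnB w1 w2)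
  have hX2: "hn X2" unfolding X2_def by (intro hn_mult hn_P hn_N hnA hnB w1 w2)
  note m = M1[OF w1 w2]
  note l2 = lin[OF hnA[OF w2] hnB[OF w2]]
  have eA: "eventually (\<lambda>z. Aw (ML w1 w2) z =
      (Pp (Aw w1) z * Pp (Aw w2) z - Pp X1 z - Pp X2 z) +
      (- Nn X1 z - Nn X2 z - Nn (Bw w1) z * Nn (Aw w2) z - Nn (Aw w1) z * Nn (Aw w2) z - Nn (Aw w1) z * Nn (Bw w2) z)) near"
    using m(1) l2(2) R1[OF hnA[OF w1]] R1[OF hnA[OF w2]] R1[OF hX1] R1[OF hX2]
    by eventually_elim (simp only: X1_def X2_def, simp (no_asm) add: algebra_simps)
  have dA: "eventually (\<lambda>z. Pp (Aw (ML w1 w2)) z = Pp (Aw w1) z * Pp (Aw w2) z - Pp X1 z - Pp X2 z) near"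
    by (rule dec(1)[OF hnA[OF hu] _ _ eA])
       (intro PlusT_diff PlusT_mult PlusT_P MinusT_diff MinusT_neg MinusT_mult MinusT_N hX1 hX2 hnA hnB w1 w2)+
  have eB: "eventually (\<lambda>z. Bw (ML w1 w2) z =
      (Pp (Aw w1) z * Pp (Bw w2) z + Pp (Bw w1) z * Pp (Aw w2) z + Pp (Bw w1) z * Pp (Bw w2) z + Pp X1 z + Pp X2 z) +
      (Nn X1 z + Nn X2 z - Nn (Bw w1) z * Nn (Bw w2) z)) near"
    using m(2) l2(1) R1[OF hnA[OF w1]] R1[OF hnA[OF w2]] R1[OF hnB[OF w1]] R1[OF hnB[OF w2]] R1[OF hX1] R1[OF hX2]
    by eventually_elim (simp only: X1_def X2_def, simp (no_asm) add: algebra_simps)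
  have dB: "eventually (\<lambda>z. Nn (Bw (ML w1 w2)) z = Nn X1 z + Nn X2 z - Nn (Bw w1) z * Nn (Bw w2) z) near"
    by (rule dec(2)[OF hnB[OF hu] _ _ eB])
       (intro PlusT_add PlusT_mult PlusT_P MinusT_diff MinusT_add MinusT_mult MinusT_N hX1 hX2 hnA hnB w1 w2)+
  show ?thesis
    using dA dB R1[OF hX1] R1[OF hX2]
    by eventually_elim (simp only: X1_def X2_def, simp (no_asm) add: algebra_simps)
qed


lemma germ_eq_ev: "germ_eq c r m p q \<longleftrightarrow> eventually (\<lambda>z. fst p z = fst q z \<and> snd p z = snd q z) near"
  by (simp add: germ_eq_def eventually_near)

lemma eta_cong:
  assumes w: "hnw w" and w': "hnw w'" and e1: "eventually (\<lambda>z. fst w z = fst w' z) near"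
    and e2: "eventually (\<lambda>z. snd w z = snd w' z) near"
  shows "eventually (\<lambda>z. fst (eta c r m a ah w) z = fst (eta c r m a ah w') z \<and>
                        snd (eta c r m a ah w) z = snd (eta c r m a ah w') z) near"
proof -
  have es: "eventually (\<lambda>z. sw w z = sw w' z) near" using e1 e2 by eventually_elim simp
  have et: "eventually (\<lambda>z. tw w z = tw w' z) near" using e1 e2 by eventually_elim simp
  note cs = ev_congP[OF hns[OF w] hns[OF w'] es]
  note ct = ev_congP[OF hnt[OF w] hnt[OF w'] et]
  show ?thesis using cs ct by eventually_elim (simp add: eta_fst eta_snd)
qed

lemma comm:
  assumes w1: "hnw w1" and w2: "hnw w2"
  shows "germ_eq c r m (eta c r m a ah (ML w1 w2)) (eta c r m a ah (ML w2 w1))"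
proof -
  have e1: "eventually (\<lambda>z. fst (ML w1 w2) z = fst (ML w2 w1) z) near"
    using R1[OF hnA[OF w1]] R1[OF hnA[OF w2]]
    by eventually_elim (simp only: mult_fst, simp (no_asm) add: algebra_simps)
  have e2: "eventually (\<lambda>z. snd (ML w1 w2) z = snd (ML w2 w1) z) near"
    using R1[OF hnB[OF w1]] R1[OF hnB[OF w2]]
    by eventually_elim (simp only: mult_snd, simp (no_asm) add: algebra_simps)
  show ?thesis unfolding germ_eq_ev
    by (rule eta_cong[OF hnw_mult[OF w1 w2] hnw_mult[OF w2 w1] e1 e2])
qed

lemma assoc:
  assumes w1: "hnw w1" and w2: "hnw w2" and w3: "hnw w3"
  shows "germ_eq c r m (eta c r m a ah (ML (ML w1 w2) w3)) (eta c r m a ah (ML w1 (ML w2 w3)))"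
proof -
  have hu: "hnw (ML w1 w2)" by (rule hnw_mult[OF w1 w2])
  have hv: "hnw (ML w2 w3)" by (rule hnw_mult[OF w2 w3])
  note mu = M1[OF hu w3]
  note m12 = M1[OF w1 w2]
  note k = K2[OF w1 w2]
  note mv = M1[OF w1 hv]
  note m23 = M1[OF w2 w3]
  note t23 = T[OF w2 w3]
  have e1: "eventually (\<lambda>z. fst (ML (ML w1 w2) w3) z = fst (ML w1 (ML w2 w3)) z) near"
    using mu(1) m12(1) k mv(1) m23(1) t23(2)
    by eventually_elim (simp only:, simp (no_asm) add: algebra_simps)
  have e2: "eventually (\<lambda>z. snd (ML (ML w1 w2) w3) z = snd (ML w1 (ML w2 w3)) z) near"
    using mu(2) m12(2) k mv(2) m23(2) t23(1)
    by eventually_elim (simp only:, simp (no_asm) add: algebra_simps)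
  show ?thesis unfolding germ_eq_ev
    by (rule eta_cong[OF hnw_mult[OF hu w3] hnw_mult[OF w1 hv] e1 e2])
qed

lemma ideal:
  assumes w1: "hnw w1" and w2: "hnw w2"
    and ker: "germ_eq c r m (eta c r m a ah w2) (\<lambda>_. 0, \<lambda>_. 0)"
  shows "germ_eq c r m (eta c r m a ah (ML w1 w2)) (\<lambda>_. 0, \<lambda>_. 0)"
proof -
  have k: "eventually (\<lambda>z. fst (eta c r m a ah w2) z = 0 \<and> snd (eta c r m a ah w2) z = 0) near"
    using ker unfolding germ_eq_ev by simp
  have kN: "eventually (\<lambda>z. Nn (tw w2) z = deriv a z * Nn (sw w2) z) near"
    using k by eventually_elim (simp add: eta_fst)
  have kP: "eventually (\<lambda>z. Pp (tw w2) z = deriv ah z * Pp (sw w2) z) near"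
    using k by eventually_elim (simp add: eta_snd)
  have hu: "hnw (ML w1 w2)" by (rule hnw_mult[OF w1 w2])
  note m = M1[OF w1 w2]
  note l1 = lin[OF hnA[OF w1] hnB[OF w1]]
  have es: "eventually (\<lambda>z. sw (ML w1 w2) z =
      Pp (sw w2) z * Pp (tw w1) z + (- (Nn (sw w2) z * Nn (tw w1) z))) near"
    using m(1) m(2) kN kP R1[OF hns[OF w2]] R1[OF hnA[OF w1]] R1[OF hnB[OF w1]] l1(1) l1(2)
    by eventually_elim (simp only:, simp (no_asm) add: algebra_simps)
  note d = dec[OF hns[OF hu] PlusT_mult[OF PlusT_P[OF hns[OF w2]] PlusT_P[OF hnt[OF w1]]]
      MinusT_neg[OF MinusT_mult[OF MinusT_N[OF hns[OF w2]] MinusT_N[OF hnt[OF w1]]]] es]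
  note t = T[OF w1 w2]
  show ?thesis unfolding germ_eq_ev
    using d(1) d(2) t(1) t(2) kN kP
    by eventually_elim (simp only: eta_fst eta_snd fst_conv snd_conv, simp (no_asm) add: algebra_simps)
qed

end

theorem lemma2p6:
  fixes m :: nat and n :: "nat \<Rightarrow> nat" and d :: "nat \<Rightarrow> int"
    and c :: "nat \<Rightarrow> complex" and r :: "nat \<Rightarrow> real" and \<phi> :: "nat \<Rightarrow> complex"
    and a ah :: "complex \<Rightarrow> complex"
  assumes "m \<ge> 1"
    and "\<forall>i\<in>{0..m}. n i > 0"
    and "\<forall>i\<in>{1..m}. d i \<noteq> 0"
    and "\<forall>i\<in>{1..m}. r i > 0"
    and "\<forall>i\<in>{1..m}. \<forall>j\<in>{1..m}. i \<noteq> j \<longrightarrow> cball (c i) (r i) \<inter> cball (c j) (r j) = {}"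
    and "in_M c r m n d \<phi> a ah"
  shows
    "(\<forall>w1 w2. holo_near c r m (fst w1) \<and> holo_near c r m (snd w1) \<and>
        holo_near c r m (fst w2) \<and> holo_near c r m (snd w2) \<and>
        germ_eq c r m (eta c r m a ah w2) (\<lambda>_. 0, \<lambda>_. 0) \<longrightarrow>
        germ_eq c r m (eta c r m a ah (mult c r m a ah w1 w2)) (\<lambda>_. 0, \<lambda>_. 0))
   \<and> (\<forall>w1 w2. holo_near c r m (fst w1) \<and> holo_near c r m (snd w1) \<and>
        holo_near c r m (fst w2) \<and> holo_near c r m (snd w2) \<longrightarrow>
        germ_eq c r m (eta c r m a ah (mult c r m a ah w1 w2))
                      (eta c r m a ah (mult c r m a ah w2 w1)))
   \<and> (\<forall>w1 w2 w3. holo_near c r m (fst w1) \<and> holo_near c r m (snd w1) \<and>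
        holo_near c r m (fst w2) \<and> holo_near c r m (snd w2) \<and>
        holo_near c r m (fst w3) \<and> holo_near c r m (snd w3) \<longrightarrow>
        germ_eq c r m (eta c r m a ah (mult c r m a ah (mult c r m a ah w1 w2) w3))
                      (eta c r m a ah (mult c r m a ah w1 (mult c r m a ah w2 w3))))"
  proof -
  interpret circs c r m
    by unfold_locales (use assms(4,5) in auto)
  have ha: "holo_near c r m (deriv a)"
  proof -
    obtain U where U: "open U" "- disks_int c r m \<subseteq> U" "a holomorphic_on U"
      using assms(6) unfolding in_M_def by blast
    have "deriv a holomorphic_on U" by (rule holomorphic_deriv[OF U(3) U(1)])
    then show ?thesis unfolding holo_near_def using U(1,2) C_sub_nDi by blast
  qed
  have hah: "holo_near c r m (deriv ah)"
  proof -
    obtain U where U: "open U" "disks c r m \<subseteq> U" "ah holomorphic_on (U - \<phi> ` {1..m})"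
      using assms(6) unfolding in_M_def by blast
    have phi: "\<phi> j \<in> ball (c j) (r j)" if "j \<in> {1..m}" for j
      using assms(6) that unfolding in_M_def by blast
    have o: "open (U - \<phi> ` {1..m})" using U(1) by (intro open_Diff finite_imp_closed) auto
    have "deriv ah holomorphic_on (U - \<phi> ` {1..m})" by (rule holomorphic_deriv[OF U(3) o])
    moreover have "circles c r m \<subseteq> U - \<phi> ` {1..m}"
    proof
      fix z assume z: "z \<in> circles c r m"
      have "z \<in> U" using z C_sub_Dk U(2) by blast
      moreover have "z \<notin> \<phi> ` {1..m}"
      proof
        assume "z \<in> \<phi> ` {1..m}"
        then obtain j where j: "j \<in> {1..m}" "z = \<phi> j" by blast
        then have "z \<in> disks_int c r m" using phi[OF j(1)] unfolding Di_def' by blast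
        then show False using z C_not_Di by blast
      qed
      ultimately show "z \<in> U - \<phi> ` {1..m}" by blast
    qed
    ultimately show ?thesis unfolding holo_near_def using o by blast
  qed
  interpret alg c r m a ah
    by unfold_locales (use assms(4,5) ha hah in auto)
  show ?thesis
  proof (intro conjI allI impI)
    fix w1 w2 :: cpair
    assume h: "holo_near c r m (fst w1) \<and> holo_near c r m (snd w1) \<and>
        holo_near c r m (fst w2) \<and> holo_near c r m (snd w2) \<and>
        germ_eq c r m (eta c r m a ah w2) (\<lambda>_. 0, \<lambda>_. 0)"
    then show "germ_eq c r m (eta c r m a ah (mult c r m a ah w1 w2)) (\<lambda>_. 0, \<lambda>_. 0)"
      using ideal by blast
  next
    fix w1 w2 :: cpair
    assume h: "holo_near c r m (fst w1) \<and> holo_near c r m (snd w1) \<and>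
        holo_near c r m (fst w2) \<and> holo_near c r m (snd w2)"
    then show "germ_eq c r m (eta c r m a ah (mult c r m a ah w1 w2))
                      (eta c r m a ah (mult c r m a ah w2 w1))"
      using comm by blast
  next
    fix w1 w2 w3 :: cpair
    assume h: "holo_near c r m (fst w1) \<and> holo_near c r m (snd w1) \<and>
        holo_near c r m (fst w2) \<and> holo_near c r m (snd w2) \<and>
        holo_near c r m (fst w3) \<and> holo_near c r m (snd w3)"
    then show "germ_eq c r m (eta c r m a ah (mult c r m a ah (mult c r m a ah w1 w2) w3))
                      (eta c r m a ah (mult c r m a ah w1 (mult c r m a ah w2 w3)))"
      using assoc by blast
  qed
qed

end
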